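(* Let $S$ be a complete metric space with distance $d$, and let $\preceq$ be a topological orientation on $S$. Assume that every left-bounded pair in $S$ has a meet, and that $h:S\to\mathbb{R}$ is continuous and a discriminator. Then $(S,\preceq)$ is a cc sponge.
   Context: An orientation on $S$ is a reflexive, antisymmetric binary relation $\preceq$; it is a topological orientation if $\preceq$ is a closed subset of $S\times S$. For $P\subseteq S$: $P$ is left-bounded if some $s\in S$ has $s\preceq p$ for all $p\in P$, right-bounded if some $s$ has $p\preceq s$ for all $p\in P$. The meet of $P$ is an element $x$ with $x\preceq p$ for all $p\in P$ and $y\preceq x$ for every $y$ with $y\preceq p$ for all $p\in P$; the join is defined dually. $(S,\preceq)$ is a cc sponge if every nonempty right-bounded subset has a join. A function $h:S\to\mathbb{R}$ is a discriminator if for every $\varepsilon>0$ there is $\delta>0$ such that for all $x,y\in S$, $x\preceq y$ and $h(y)<h(x)+\delta$ imply $d(x,y)<\varepsilon$. *)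

theory Defs
  imports "HOL-Analysis.Analysis"
begin

definition orientation :: "('a \<Rightarrow> 'a \<Rightarrow> bool) \<Rightarrow> bool" where
  "orientation R \<longleftrightarrow> (\<forall>x. R x x) \<and> (\<forall>x y. R x y \<and> R y x \<longrightarrow> x = y)"

definition topological_orientation :: "('a::topological_space \<Rightarrow> 'a \<Rightarrow> bool) \<Rightarrow> bool" where
  "topological_orientation R \<longleftrightarrow> orientation R \<and> closed {(x, y). R x y}"

definition left_bounded :: "('a \<Rightarrow> 'a \<Rightarrow> bool) \<Rightarrow> 'a set \<Rightarrow> bool" where
  "left_bounded R P \<longleftrightarrow> (\<exists>s. \<forall>p\<in>P. R s p)"

definition right_bounded :: "('a \<Rightarrow> 'a \<Rightarrow> bool) \<Rightarrow> 'a set \<Rightarrow> bool" where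
  "right_bounded R P \<longleftrightarrow> (\<exists>s. \<forall>p\<in>P. R p s)"

definition is_meet :: "('a \<Rightarrow> 'a \<Rightarrow> bool) \<Rightarrow> 'a set \<Rightarrow> 'a \<Rightarrow> bool" where
  "is_meet R P x \<longleftrightarrow> (\<forall>p\<in>P. R x p) \<and> (\<forall>y. (\<forall>p\<in>P. R y p) \<longrightarrow> R y x)"

definition is_join :: "('a \<Rightarrow> 'a \<Rightarrow> bool) \<Rightarrow> 'a set \<Rightarrow> 'a \<Rightarrow> bool" where
  "is_join R P x \<longleftrightarrow> (\<forall>p\<in>P. R p x) \<and> (\<forall>y. (\<forall>p\<in>P. R p y) \<longrightarrow> R x y)"

definition cc_sponge :: "('a \<Rightarrow> 'a \<Rightarrow> bool) \<Rightarrow> bool" where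
  "cc_sponge R \<longleftrightarrow> (\<forall>P. P \<noteq> {} \<and> right_bounded R P \<longrightarrow> (\<exists>x. is_join R P x))"

definition discriminator :: "('a::metric_space \<Rightarrow> 'a \<Rightarrow> bool) \<Rightarrow> ('a \<Rightarrow> real) \<Rightarrow> bool" where
  "discriminator R h \<longleftrightarrow>
     (\<forall>\<epsilon>>0. \<exists>\<delta>>0. \<forall>x y. R x y \<and> h y < h x + \<delta> \<longrightarrow> dist x y < \<epsilon>)"

end

theory Submission
  imports Defs
begin

lemma discD:
  assumes "discriminator R h" "(e::real) > 0"
  shows "\<exists>\<delta>>0. \<forall>x y. R x y \<and> h y < h x + \<delta> \<longrightarrow> dist x y < e"
proof -
  have "\<forall>\<epsilon>>0. \<exists>\<delta>>0. \<forall>x y. R x y \<and> h y < h x + \<delta> \<longrightarrow> dist x y < \<epsilon>"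
    using assms(1) unfolding discriminator_def .
  then show ?thesis using assms(2) by blast
qed

lemma disc_eq:
  fixes R :: "'a::metric_space \<Rightarrow> 'a \<Rightarrow> bool"
  assumes "discriminator R h" "R x y" "h y \<le> h x"
  shows "x = y"
proof (rule ccontr)
  assume "x \<noteq> y"
  then have "dist x y > 0" by simp
  then obtain \<delta> where "\<delta> > 0" and d: "\<forall>a b. R a b \<and> h b < h a + \<delta> \<longrightarrow> dist a b < dist x y"
    using discD[OF assms(1) \<open>dist x y > 0\<close>] by blast
  have "h y < h x + \<delta>" using assms(3) \<open>\<delta> > 0\<close> by linarith
  then have "dist x y < dist x y" using d[rule_format, OF conjI[OF assms(2)]] by simp
  then show False by simp
qed

lemma disc_mono:
  fixes R :: "'a::metric_space \<Rightarrow> 'a \<Rightarrow> bool"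
  assumes "discriminator R h" "R x y"
  shows "h x \<le> h y"
proof (rule ccontr)
  assume "\<not> h x \<le> h y"
  then have "x = y" using disc_eq[OF assms] by simp
  then show False using \<open>\<not> h x \<le> h y\<close> by simp
qed

theorem mainTheorem3:
  fixes R :: "'a::complete_space \<Rightarrow> 'a \<Rightarrow> bool"
    and h :: "'a \<Rightarrow> real"
  assumes "topological_orientation R"
    and "\<And>a b. left_bounded R {a, b} \<Longrightarrow> \<exists>m. is_meet R {a, b} m"
    and "continuous_on UNIV h"
    and "discriminator R h"
  shows "cc_sponge R"
  unfolding cc_sponge_def
proof (intro allI impI)
  fix P assume PA: "P \<noteq> {} \<and> right_bounded R P"
  then obtain p0 where p0: "p0 \<in> P" by blast
  from PA obtain s where s: "\<forall>p\<in>P. R p s" unfolding right_bounded_def by blast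
  define U where "U = {u. \<forall>p\<in>P. R p u}"
  have sU: "s \<in> U" using s U_def by simp
  have meetU: "\<exists>z. z \<in> U \<and> R z a \<and> R z b \<and> (\<forall>y. R y a \<and> R y b \<longrightarrow> R y z)" if "a \<in> U" "b \<in> U" for a b
  proof -
    have "left_bounded R {a, b}" unfolding left_bounded_def using that p0 U_def by auto
    then obtain z where z: "is_meet R {a, b} z" using assms(2) by blast
    then have "z \<in> U" using that unfolding U_def is_meet_def by auto
    then show ?thesis using z unfolding is_meet_def by auto
  qed
  define c where "c = Inf (h ` U)"
  have bdd: "bdd_below (h ` U)"
    unfolding bdd_below_def U_def using p0 disc_mono[OF assms(4)] by blast
  have cle: "c \<le> h u" if "u \<in> U" for u
    unfolding c_def using bdd that by (simp add: cInf_lower)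
  have "\<exists>u. u \<in> U \<and> h u < c + 1 / (real n + 1)" for n
  proof -
    have "h ` U \<noteq> {}" using sU by blast
    moreover have "c < c + 1 / (real n + 1)" by simp
    then have "Inf (h ` U) < c + 1 / (real n + 1)" unfolding c_def .
    ultimately obtain v where "v \<in> h ` U" "v < c + 1 / (real n + 1)" using cInf_lessD by metis
    then show ?thesis by blast
  qed
  then obtain u where u: "\<And>n. u n \<in> U" "\<And>n. h (u n) < c + 1 / (real n + 1)" by metis
  have cau: "Cauchy u"
  proof (rule metric_CauchyI)
    fix e :: real assume "e > 0"
    then obtain \<delta> where "\<delta> > 0" and d: "\<forall>x y. R x y \<and> h y < h x + \<delta> \<longrightarrow> dist x y < e/2"
      using discD[OF assms(4), of "e/2"] \<open>e > 0\<close> by auto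
    obtain N :: nat where N: "1 / (real N + 1) < \<delta>"
      using \<open>\<delta> > 0\<close> by (metis nat_approx_posE of_nat_Suc add.commute)
    have small: "h (u n) < c + \<delta>" if "n \<ge> N" for n
    proof -
      have "1 / (real n + 1) \<le> 1 / (real N + 1)" using that by (simp add: frac_le)
      then show ?thesis using u(2)[of n] N by linarith
    qed
    show "\<exists>M. \<forall>m\<ge>M. \<forall>n\<ge>M. dist (u m) (u n) < e"
    proof (intro exI allI impI)
      fix m n assume mn: "m \<ge> N" "n \<ge> N"
      obtain z where z: "z \<in> U" "R z (u m)" "R z (u n)" using meetU[OF u(1) u(1)] by blast
      have "h (u m) < h z + \<delta>" using cle[OF z(1)] small[OF mn(1)] by linarith
      then have "dist z (u m) < e/2" using d[rule_format, OF conjI[OF z(2)]] by simp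
      moreover have "h (u n) < h z + \<delta>" using cle[OF z(1)] small[OF mn(2)] by linarith
      then have "dist z (u n) < e/2" using d[rule_format, OF conjI[OF z(3)]] by simp
      ultimately have "dist (u m) z + dist (u n) z < e" by (simp add: dist_commute)
      then show "dist (u m) (u n) < e" using dist_triangle2[of "u m" "u n" z] by linarith
    qed
  qed
  then obtain m where lim: "u \<longlonglongrightarrow> m" using convergent_eq_Cauchy by blast
  have hlim1: "(\<lambda>n. h (u n)) \<longlonglongrightarrow> h m"
    using assms(3) lim by (metis UNIV_I continuous_on_tendsto_compose eventually_sequentially)
  have hlim2: "(\<lambda>n. h (u n)) \<longlonglongrightarrow> c"
  proof (rule real_tendsto_sandwich[where f="\<lambda>n. c" and h="\<lambda>n. c + 1 / (real n + 1)"])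
    show "\<forall>\<^sub>F n in sequentially. c \<le> h (u n)" using cle u(1) by simp
    show "\<forall>\<^sub>F n in sequentially. h (u n) \<le> c + 1 / (real n + 1)" using u(2) by (simp add: less_imp_le)
    show "(\<lambda>n. c) \<longlonglongrightarrow> c" by simp
    show "(\<lambda>n. c + 1 / (real n + 1)) \<longlonglongrightarrow> c"
      using LIMSEQ_inverse_real_of_nat_add[of c] by (simp add: inverse_eq_divide add.commute)
  qed
  have hm: "h m = c" using hlim1 hlim2 LIMSEQ_unique by blast
  have cl: "closed {(x, y). R x y}" using assms(1) unfolding topological_orientation_def by blast
  have mU: "m \<in> U" unfolding U_def
  proof (intro CollectI ballI)
    fix p assume "p \<in> P"
    have L: "(\<lambda>n. (p, u n)) \<longlonglongrightarrow> (p, m)" using lim by (intro tendsto_Pair) auto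
    have A: "(p, u n) \<in> {(x, y). R x y}" for n using u(1)[of n] \<open>p \<in> P\<close> unfolding U_def by simp
    have "(p, m) \<in> {(x, y). R x y}" by (rule closed_sequentially[OF cl A L])
    then show "R p m" by simp
  qed
  show "\<exists>x. is_join R P x" unfolding is_join_def
  proof (intro exI conjI)
    show "\<forall>p\<in>P. R p m" using mU U_def by simp
    show "\<forall>y. (\<forall>p\<in>P. R p y) \<longrightarrow> R m y"
    proof (intro allI impI)
      fix y assume "\<forall>p\<in>P. R p y"
      then have yU: "y \<in> U" using U_def by simp
      obtain z where z: "z \<in> U" "R z m" "R z y" using meetU[OF mU yU] by blast
      have "h m \<le> h z" using cle[OF z(1)] hm by simp
      then have "z = m" using disc_eq[OF assms(4) z(2)] by simp
      then show "R m y" using z(3) by simp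
    qed
  qed
qed

end
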